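(* For $\alpha\in\mathbb{R}\setminus\{0\}$ let $$P_{-2}=\frac{uz}{2},\quad P_{-1}=\frac{u-y-2\alpha(yu+uz-y)}{2\alpha},\quad P_0=\frac{u(\alpha x+4\alpha y+\alpha z-2)+2(\alpha-2\alpha y+y)}{2\alpha},$$ $$P_1=\frac{u-y-2\alpha(xu+yu-y)}{2\alpha},\quad P_2=\frac{xu}{2},$$ and let $\gamma_\alpha=\sup\{\delta\ge0:\ P_i(x,y,z,u)\ge0\ \text{for all } -2\le i\le2 \text{ and all }(x,y,z,u)\in[0,\delta]^4\}$. Then $\gamma_\alpha=\frac12$ for $\alpha\in[\frac12,1]$, and $\gamma_\alpha<\frac12$ for $0\ne\alpha<\frac12$ and for $\alpha>1$.
   Context: These are the positivity polynomials of the two-stage second-order explicit Runge--Kutta method with $a_{21}=\alpha$, $b=(1-\frac1{2\alpha},\frac1{2\alpha})$, applied to the semi-discretized heat equation $u_k'=q_k\,(u_{k-1}-2u_k+u_{k+1})/(\Delta x)^2$ with periodic indices and $q_k\ge0$: one step gives $u^{n+1}_k=\sum_{i=-2}^2P_iu^n_{k-i}$, where $x=\xi^1_{k-1}$, $y=\xi^1_k$, $z=\xi^1_{k+1}$, $u=\xi^2_k$ and $\xi^j_\ell=\Delta t\,q_\ell/(\Delta x)^2$ are treated as independent variables. *)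

theory Defs
  imports Complex_Main
begin

text \<open>Positivity polynomials P_{-2},...,P_2 of the two-stage second-order explicit RK method.
  Index i ranges over the integers -2..2.\<close>

definition Ppos :: "real \<Rightarrow> int \<Rightarrow> real \<Rightarrow> real \<Rightarrow> real \<Rightarrow> real \<Rightarrow> real" where
  "Ppos \<alpha> i x y z u =
    (if i = -2 then u * z / 2
     else if i = -1 then (u - y - 2 * \<alpha> * (y * u + u * z - y)) / (2 * \<alpha>)
     else if i = 0 then (u * (\<alpha> * x + 4 * \<alpha> * y + \<alpha> * z - 2) + 2 * (\<alpha> - 2 * \<alpha> * y + y)) / (2 * \<alpha>)
     else if i = 1 then (u - y - 2 * \<alpha> * (x * u + y * u - y)) / (2 * \<alpha>)
     else if i = 2 then x * u / 2
     else 0)"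

definition gamma :: "real \<Rightarrow> real" where
  "gamma \<alpha> = Sup {\<delta>::real. \<delta> \<ge> 0 \<and>
     (\<forall>i::int. -2 \<le> i \<and> i \<le> 2 \<longrightarrow>
       (\<forall>x y z u. x \<in> {0..\<delta>} \<and> y \<in> {0..\<delta>} \<and> z \<in> {0..\<delta>} \<and> u \<in> {0..\<delta>}
          \<longrightarrow> Ppos \<alpha> i x y z u \<ge> 0))}"

end

theory Submission
  imports Defs
begin

definition SS :: "real \<Rightarrow> real set" where
  "SS \<alpha> = {\<delta>::real. \<delta> \<ge> 0 \<and>
     (\<forall>i::int. -2 \<le> i \<and> i \<le> 2 \<longrightarrow>
       (\<forall>x y z u. x \<in> {0..\<delta>} \<and> y \<in> {0..\<delta>} \<and> z \<in> {0..\<delta>} \<and> u \<in> {0..\<delta>}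
          \<longrightarrow> Ppos \<alpha> i x y z u \<ge> 0))}"

lemma gamma_SS: "gamma \<alpha> = Sup (SS \<alpha>)"
  unfolding gamma_def SS_def by simp

lemma Pm1: "Ppos a (-1) x y z u = (u - y - 2 * a * (y * u + u * z - y)) / (2 * a)"
  by (simp add: Ppos_def)
lemma P1: "Ppos a 1 x y z u = (u - y - 2 * a * (x * u + y * u - y)) / (2 * a)"
  by (simp add: Ppos_def)

lemma divpos: "0 \<le> N/(2*a) \<Longrightarrow> (a::real) > 0 \<Longrightarrow> 0 \<le> N"
  by (simp only: zero_le_divide_iff) auto
lemma divneg: "0 \<le> N/(2*a) \<Longrightarrow> (a::real) < 0 \<Longrightarrow> N \<le> 0"
  by (simp only: zero_le_divide_iff) auto

lemma memD: "\<delta> \<in> SS a \<Longrightarrow> -2 \<le> i \<Longrightarrow> i \<le> 2 \<Longrightarrow> x \<in> {0..\<delta>} \<Longrightarrow> y \<in> {0..\<delta>}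
   \<Longrightarrow> z \<in> {0..\<delta>} \<Longrightarrow> u \<in> {0..\<delta>} \<Longrightarrow> Ppos a i x y z u \<ge> 0"
  unfolding SS_def by blast

lemma zero_in: "a \<noteq> 0 \<Longrightarrow> 0 \<in> SS a"
  unfolding SS_def by (auto simp: Ppos_def)

lemma bilin:
  fixes a u y :: real
  assumes "1/2 \<le> a" "a \<le> 1" "0 \<le> u" "u \<le> 1/2" "0 \<le> y" "y \<le> 1/2"
  shows "0 \<le> u * (1 - a) + y * (2*a - 1) - 2*a*u*y"
proof -
  have e: "u * (1 - a) + y * (2*a - 1) - 2*a*u*y = u*(1-a)*(1-2*y) + y*(2*a-1)*(1-2*u)"
    by (simp add: algebra_simps)
  show ?thesis unfolding e using assms
    by (intro add_nonneg_nonneg mult_nonneg_nonneg) auto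
qed

lemma half_in:
  assumes "1/2 \<le> a" "a \<le> 1"
  shows "1/2 \<in> SS a"
proof -
  have apos: "a > 0" using assms by simp
  have "Ppos a i x y z u \<ge> 0" if "-2 \<le> i" "i \<le> 2" and
     h: "x \<in> {0..1/2}" "y \<in> {0..1/2}" "z \<in> {0..1/2}" "u \<in> {0..1/2}" for i x y z u
  proof -
    have "i = -2 \<or> i = -1 \<or> i = 0 \<or> i = 1 \<or> i = 2" using that by auto
    moreover have "Ppos a (-2) x y z u \<ge> 0" using h by (simp add: Ppos_def)
    moreover have "Ppos a 2 x y z u \<ge> 0" using h by (simp add: Ppos_def)
    moreover have "Ppos a (-1) x y z u \<ge> 0"
    proof -
      have "u*(2*z) \<le> u*1" using h by (intro mult_left_mono) auto
      hence "a*(u*(2*z)) \<le> a*(u*1)" by (rule mult_left_mono) (use apos in auto)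
      hence "2*a*u*z \<le> a*u" by (simp add: algebra_simps)
      moreover have "0 \<le> u * (1 - a) + y * (2*a - 1) - 2*a*u*y"
        using bilin[OF assms, of u y] h by auto
      ultimately have "0 \<le> u - y - 2 * a * (y * u + u * z - y)"
        by (simp add: algebra_simps)
      thus ?thesis unfolding Pm1 using apos by simp
    qed
    moreover have "Ppos a 1 x y z u \<ge> 0"
    proof -
      have "u*(2*x) \<le> u*1" using h by (intro mult_left_mono) auto
      hence "a*(u*(2*x)) \<le> a*(u*1)" by (rule mult_left_mono) (use apos in auto)
      hence "2*a*u*x \<le> a*u" by (simp add: algebra_simps)
      moreover have "0 \<le> u * (1 - a) + y * (2*a - 1) - 2*a*u*y"
        using bilin[OF assms, of u y] h by auto
      ultimately have "0 \<le> u - y - 2 * a * (x * u + y * u - y)"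
        by (simp add: algebra_simps)
      thus ?thesis unfolding P1 using apos by simp
    qed
    moreover have "Ppos a 0 x y z u \<ge> 0"
    proof -
      define s where "s = 2*u"
      define t where "t = 2*y"
      have st: "0 \<le> s" "s \<le> 1" "0 \<le> t" "t \<le> 1" using h by (auto simp: s_def t_def)
      have e: "u*(4*a*y-2) + 2*a - 4*a*y + 2*y =
        (1-s)*(1-t)*(2*a) + s*(1-t)*(2*a-1) + (1-s)*t + s*t*a"
        by (simp add: s_def t_def algebra_simps)
      have "0 \<le> (1-s)*(1-t)*(2*a) + s*(1-t)*(2*a-1) + (1-s)*t + s*t*a"
        using st assms by (intro add_nonneg_nonneg mult_nonneg_nonneg) auto
      moreover have "0 \<le> a*u*(x+z)" using h apos by auto
      ultimately have "0 \<le> u * (a * x + 4 * a * y + a * z - 2) + 2 * (a - 2 * a * y + y)"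
        using e by (simp add: algebra_simps)
      thus ?thesis using apos by (simp add: Ppos_def)
    qed
    ultimately show ?thesis by auto
  qed
  thus ?thesis unfolding SS_def by auto
qed

lemma bound_mid:
  assumes "1/2 \<le> a" "a \<le> 1" "d \<in> SS a"
  shows "d \<le> 1/2"
proof (rule ccontr)
  assume "\<not> d \<le> 1/2"
  hence d: "d > 1/2" by simp
  have apos: "a > 0" using assms by simp
  have "Ppos a (-1) d d d d \<ge> 0" using memD[OF assms(3), of "-1" d d d d] d by auto
  hence "0 \<le> (d - d - 2 * a * (d * d + d * d - d))" unfolding Pm1 using apos
    by (rule divpos)
  moreover have "(d - d - 2 * a * (d * d + d * d - d)) = -((2*a) * (d*(2*d-1)))" by (simp add: algebra_simps)
  ultimately have "0 \<le> -((2*a) * (d*(2*d-1)))" by linarith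
  moreover have "0 < (2*a) * (d*(2*d-1))" using apos d by simp
  ultimately show False by linarith
qed

lemma bound_small:
  assumes "a \<noteq> 0" "a < 1/2" "d \<in> SS a"
  shows "d \<le> 0"
proof (rule ccontr)
  assume "\<not> d \<le> 0"
  hence d: "d > 0" by simp
  show False
  proof (cases "a > 0")
    case True
    have "Ppos a (-1) 0 d 0 0 \<ge> 0" using memD[OF assms(3), of "-1" 0 d 0 0] d by auto
    hence "0 \<le> (0 - d - 2 * a * (d * 0 + 0 * 0 - d))" unfolding Pm1 using True
      by (rule divpos)
    hence "0 \<le> d * (2*a - 1)" by (simp add: algebra_simps)
    moreover have "d * (2*a - 1) < 0" using d assms by (simp add: mult_pos_neg)
    ultimately show False by linarith
  next
    case False
    hence an: "a < 0" using assms by simp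
    have "Ppos a (-1) 0 0 d d \<ge> 0" using memD[OF assms(3), of "-1" 0 0 d d] d by auto
    hence "(d - 0 - 2 * a * (0 * d + d * d - 0)) \<le> 0" unfolding Pm1 using an
      by (rule divneg)
    moreover have "0 \<le> (-a) * (d*d)" using an d by (intro mult_nonneg_nonneg) auto
    moreover have "(d - 0 - 2 * a * (0 * d + d * d - 0)) = d + 2 * ((-a) * (d*d))" by (simp add: algebra_simps)
    ultimately show False using d by linarith
  qed
qed

lemma bound_big:
  assumes "a > 1" "d \<in> SS a"
  shows "d \<le> 1/(2*a)"
proof (rule ccontr)
  assume "\<not> d \<le> 1/(2*a)"
  hence d: "d > 1/(2*a)" by simp
  have apos: "a > 0" using assms by simp
  hence dp: "d > 0" using d by (smt (verit) divide_pos_pos)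
  have "2*a*d > 1" using d apos by (simp add: field_simps)
  have "Ppos a 1 d 0 0 d \<ge> 0" using memD[OF assms(2), of 1 d 0 0 d] dp by auto
  hence "0 \<le> (d - 0 - 2 * a * (d * d + 0 * d - 0))" unfolding P1 using apos
    by (rule divpos)
  hence "0 \<le> d * (1 - 2*a*d)" by (simp add: algebra_simps)
  moreover have "d * (1 - 2*a*d) < 0" using dp \<open>2*a*d > 1\<close> by (simp add: mult_pos_neg)
  ultimately show False by linarith
qed

theorem proposition9:
  shows "(\<forall>\<alpha>::real. 1/2 \<le> \<alpha> \<and> \<alpha> \<le> 1 \<longrightarrow> gamma \<alpha> = 1/2)
       \<and> (\<forall>\<alpha>::real. (\<alpha> \<noteq> 0 \<and> \<alpha> < 1/2) \<or> \<alpha> > 1 \<longrightarrow> gamma \<alpha> < 1/2)"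
proof (intro conjI allI impI)
  fix a :: real assume "1/2 \<le> a \<and> a \<le> 1"
  thus "gamma a = 1/2" unfolding gamma_SS
    by (intro cSup_eq_maximum half_in bound_mid) auto
next
  fix a :: real assume h: "(a \<noteq> 0 \<and> a < 1/2) \<or> a > 1"
  show "gamma a < 1/2"
  proof (cases "a > 1")
    case True
    have "Sup (SS a) \<le> 1/(2*a)"
      using zero_in[of a] True by (intro cSup_least bound_big) auto
    moreover have "1/(2*a) < 1/2" using True by (simp add: field_simps)
    ultimately show ?thesis unfolding gamma_SS by linarith
  next
    case False
    hence "a \<noteq> 0" "a < 1/2" using h by auto
    have "Sup (SS a) \<le> 0"
      using zero_in[of a] \<open>a \<noteq> 0\<close> by (intro cSup_least bound_small[OF \<open>a \<noteq> 0\<close> \<open>a < 1/2\<close>]) auto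
    thus ?thesis unfolding gamma_SS by linarith
  qed
qed

end
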